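(* For every instance such that $|S_2|>\pi_1+\pi_3+\pi_4-1$, $|S_2|\ge 4$ and $|S_2|$ is even, we have $H^{PW''}\le \tfrac{32000}{16947}H^*$ (note $\tfrac{32000}{16947}\approx 1.888$).
   Context: An instance consists of an integer $n\ge 1$ and growth rates $1=h(1)\ge h(2)\ge\cdots\ge h(n)>0$ of bamboos $b_1,\dots,b_n$. Bamboo Garden Trimming (discrete version): - All heights are $0$ initially. - On each day $t=1,2,\dots$ every bamboo $b_j$ grows by $h(j)$. - At the end of each day the gardener cuts exactly one bamboo $\sigma(t)\in\{1,\dots,n\}$ back to height $0$. The height of a schedule $\sigma:\mathbb{N}\to\{1,\dots,n\}$ is the supremum, over all days $t$ and all $j$, of the height of $b_j$ at the end of day $t$ just before the cut. $H^*$ denotes the infimum of this height over all schedules. Value of algorithm PW'': - Split $\{1,\dots,n\}$ into four sets: - $S_1=\{j: \tfrac23<h(j)\le 1\}$; - $S_2=\{j:\tfrac12<h(j)\le\tfrac23\}$; - $S_3=\{j: h(j)\le\tfrac12 \text{ and } \tfrac23 2^{-k}<h(j)\le 2^{-k}\text{ for some integer }k\ge1\}$; - $S_4=\{j: h(j)\le\tfrac12\text{ and } 2^{-(k+1)}<h(j)\le \tfrac23 2^{-k}\text{ for some integer }k\ge 1\}$. - Modified growths: $h''(j)=2^{-k}$ for $j\in S_3$ and $h''(j)=\tfrac23 2^{-k}$ for $j\in S_4$, with $k$ as in the definition of the set. - Let $\pi_1=|S_1|$, $sh_3=\sum_{j\in S_3}h''(j)$, $sh_4=\sum_{j\in S_4}h''(j)$,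 $\pi_3=\lfloor sh_3\rfloor$, $\pi_4=\lfloor sh_4\rfloor$, $f_3=sh_3-\pi_3$, $f_4=sh_4-\pi_4$. - Option (a): $\pi_R(a)=\lceil f_3+f_4\rceil$ and $z(a)=\pi_1+|S_2|+\pi_3+\pi_4+\pi_R(a)$. - Option (b): if $S_2=\emptyset$ put $z(b)=+\infty$. Otherwise let $h^*=\max_{j\in S_2}h(j)$ and $f_2=\tfrac12$ if $|S_2|$ is odd, $f_2=0$ if $|S_2|$ is even. Then $\pi_R(b)=\lceil f_2+f_3+f_4\rceil$ and $z(b)=2h^*\,(\pi_1+\lfloor |S_2|/2\rfloor+\pi_3+\pi_4+\pi_R(b))$. - The value returned by algorithm PW'' is $H^{PW''}=\min\{z(a),z(b)\}$. The paper takes this as the maximum height of the periodic pinwheel trimming schedule that it builds from these partitions. *)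

theory Defs
  imports Complex_Main "HOL-Library.Extended_Real"
begin

text \<open>An instance: n \<ge> 1 bamboos b_1..b_n with growth rates
  1 = h 1 \<ge> h 2 \<ge> ... \<ge> h n > 0.  Only the values h 1, ..., h n matter.\<close>
definition bgt_instance :: "nat \<Rightarrow> (nat \<Rightarrow> real) \<Rightarrow> bool" where
  "bgt_instance n h \<longleftrightarrow> n \<ge> 1 \<and> h 1 = 1 \<and>
     (\<forall>i j. 1 \<le> i \<longrightarrow> i \<le> j \<longrightarrow> j \<le> n \<longrightarrow> h j \<le> h i) \<and> h n > 0"

text \<open>A schedule cuts a bamboo of index in {1..n} at the end of each day t \<ge> 1
  (the value at 0 is irrelevant).\<close>
definition schedule :: "nat \<Rightarrow> (nat \<Rightarrow> nat) \<Rightarrow> bool" where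
  "schedule n \<sigma> \<longleftrightarrow> (\<forall>t\<ge>1. \<sigma> t \<in> {1..n})"

text \<open>Height of bamboo j at the end of day t, after the cut of day t
  (day 0 = initial state, height 0).\<close>
fun height_after :: "(nat \<Rightarrow> real) \<Rightarrow> (nat \<Rightarrow> nat) \<Rightarrow> nat \<Rightarrow> nat \<Rightarrow> real" where
  "height_after h \<sigma> j 0 = 0"
| "height_after h \<sigma> j (Suc t) =
     (if \<sigma> (Suc t) = j then 0 else height_after h \<sigma> j t + h j)"

definition height_before :: "(nat \<Rightarrow> real) \<Rightarrow> (nat \<Rightarrow> nat) \<Rightarrow> nat \<Rightarrow> nat \<Rightarrow> real" where
  "height_before h \<sigma> j t = height_after h \<sigma> j (t - 1) + h j"

text \<open>H^*: infimum over schedules of the (supremum) height; equivalently the infimum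
  of all H that bound all heights of some schedule.\<close>
definition Hstar :: "nat \<Rightarrow> (nat \<Rightarrow> real) \<Rightarrow> real" where
  "Hstar n h = Inf {H. \<exists>\<sigma>. schedule n \<sigma> \<and>
      (\<forall>t\<ge>1. \<forall>j\<in>{1..n}. height_before h \<sigma> j t \<le> H)}"

definition S1 :: "nat \<Rightarrow> (nat \<Rightarrow> real) \<Rightarrow> nat set" where
  "S1 n h = {j\<in>{1..n}. 2/3 < h j \<and> h j \<le> 1}"

definition S2 :: "nat \<Rightarrow> (nat \<Rightarrow> real) \<Rightarrow> nat set" where
  "S2 n h = {j\<in>{1..n}. 1/2 < h j \<and> h j \<le> 2/3}"

definition S3 :: "nat \<Rightarrow> (nat \<Rightarrow> real) \<Rightarrow> nat set" where
  "S3 n h = {j\<in>{1..n}. h j \<le> 1/2 \<and>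
      (\<exists>k::nat. k \<ge> 1 \<and> 2/3 * (1/2)^k < h j \<and> h j \<le> (1/2)^k)}"

definition S4 :: "nat \<Rightarrow> (nat \<Rightarrow> real) \<Rightarrow> nat set" where
  "S4 n h = {j\<in>{1..n}. h j \<le> 1/2 \<and>
      (\<exists>k::nat. k \<ge> 1 \<and> (1/2)^(k+1) < h j \<and> h j \<le> 2/3 * (1/2)^k)}"

definition h3 :: "(nat \<Rightarrow> real) \<Rightarrow> nat \<Rightarrow> real" where
  "h3 h j = (THE x. \<exists>k::nat. k \<ge> 1 \<and> x = (1/2)^k \<and> 2/3 * (1/2)^k < h j \<and> h j \<le> (1/2)^k)"

definition h4 :: "(nat \<Rightarrow> real) \<Rightarrow> nat \<Rightarrow> real" where
  "h4 h j = (THE x. \<exists>k::nat. k \<ge> 1 \<and> x = 2/3 * (1/2)^k \<and> (1/2)^(k+1) < h j \<and> h j \<le> 2/3 * (1/2)^k)"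

definition sh3 :: "nat \<Rightarrow> (nat \<Rightarrow> real) \<Rightarrow> real" where
  "sh3 n h = (\<Sum>j\<in>S3 n h. h3 h j)"

definition sh4 :: "nat \<Rightarrow> (nat \<Rightarrow> real) \<Rightarrow> real" where
  "sh4 n h = (\<Sum>j\<in>S4 n h. h4 h j)"

definition pi1 :: "nat \<Rightarrow> (nat \<Rightarrow> real) \<Rightarrow> int" where
  "pi1 n h = int (card (S1 n h))"

definition pi3 :: "nat \<Rightarrow> (nat \<Rightarrow> real) \<Rightarrow> int" where
  "pi3 n h = \<lfloor>sh3 n h\<rfloor>"

definition pi4 :: "nat \<Rightarrow> (nat \<Rightarrow> real) \<Rightarrow> int" where
  "pi4 n h = \<lfloor>sh4 n h\<rfloor>"

definition f3 :: "nat \<Rightarrow> (nat \<Rightarrow> real) \<Rightarrow> real" where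
  "f3 n h = sh3 n h - of_int (pi3 n h)"

definition f4 :: "nat \<Rightarrow> (nat \<Rightarrow> real) \<Rightarrow> real" where
  "f4 n h = sh4 n h - of_int (pi4 n h)"

definition z_a :: "nat \<Rightarrow> (nat \<Rightarrow> real) \<Rightarrow> real" where
  "z_a n h = of_int (pi1 n h + int (card (S2 n h)) + pi3 n h + pi4 n h
                     + \<lceil>f3 n h + f4 n h\<rceil>)"

definition z_b :: "nat \<Rightarrow> (nat \<Rightarrow> real) \<Rightarrow> ereal" where
  "z_b n h = (if S2 n h = {} then \<infinity> else
     (let hs = Max (h ` S2 n h);
          f2 = (if odd (card (S2 n h)) then 1/2 else 0 :: real)
      in ereal (2 * hs * of_int (pi1 n h + int (card (S2 n h) div 2) + pi3 n h + pi4 n h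
                                  + \<lceil>f2 + f3 n h + f4 n h\<rceil>))))"

definition H_PW2 :: "nat \<Rightarrow> (nat \<Rightarrow> real) \<Rightarrow> ereal" where
  "H_PW2 n h = min (ereal (z_a n h)) (z_b n h)"

end

theory Submission
  imports Defs
begin

fun cnt :: "(nat \<Rightarrow> nat) \<Rightarrow> nat \<Rightarrow> nat \<Rightarrow> nat" where
  "cnt \<sigma> j 0 = 0"
| "cnt \<sigma> j (Suc t) = cnt \<sigma> j t + (if \<sigma> (Suc t) = j then 1 else 0)"

lemma cnt_sum:
  assumes "schedule n \<sigma>"
  shows "(\<Sum>j\<in>{1..n}. cnt \<sigma> j t) = t"
proof (induction t)
  case 0 then show ?case by simp
next
  case (Suc t)
  have m: "\<sigma> (Suc t) \<in> {1..n}" using assms unfolding schedule_def by auto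
  have "(\<Sum>j\<in>{1..n}. cnt \<sigma> j (Suc t)) = (\<Sum>j\<in>{1..n}. cnt \<sigma> j t) + (\<Sum>j\<in>{1..n}. (if \<sigma> (Suc t) = j then 1 else 0))"
    by (simp add: sum.distrib)
  also have "(\<Sum>j\<in>{1..n}. (if \<sigma> (Suc t) = j then 1 else 0::nat)) = 1"
    using m by (simp add: sum.delta)
  finally show ?case using Suc by simp
qed

lemma cnt_bound:
  assumes "\<forall>t\<ge>1. height_before h \<sigma> j t \<le> H"
  shows "h j * real t \<le> (H::real) * real (cnt \<sigma> j t) + height_after h \<sigma> j t"
proof (induction t)
  case 0 then show ?case by simp
next
  case (Suc t)
  have hb: "height_after h \<sigma> j t + h j \<le> H"
    using assms[rule_format, of "Suc t"] by (simp add: height_before_def)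
  show ?case
  proof (cases "\<sigma> (Suc t) = j")
    case True
    then show ?thesis using Suc hb by (simp add: algebra_simps)
  next
    case False
    then show ?thesis using Suc by (simp add: algebra_simps)
  qed
qed

lemma density:
  assumes inst: "bgt_instance n h" and sch: "schedule n \<sigma>"
    and H: "\<forall>t\<ge>1. \<forall>j\<in>{1..n}. height_before h \<sigma> j t \<le> H"
  shows "(\<Sum>j\<in>{1..n}. h j) \<le> H"
proof -
  have key: "(\<Sum>j\<in>{1..n}. h j) * real t \<le> H * real t + H * real n" for t
  proof -
    have "h j * t \<le> H * cnt \<sigma> j t + H" if j: "j \<in> {1..n}" for j
    proof -
      have "h j * t \<le> H * cnt \<sigma> j t + height_after h \<sigma> j t"
        using cnt_bound[where h=h and \<sigma>=\<sigma> and j=j and H=H and t=t] H j by auto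
      moreover have "height_after h \<sigma> j t + h j \<le> H"
        using H j by (auto simp: height_before_def dest: spec[of _ "Suc t"])
      moreover have "h j > 0"
      proof -
        have "h n \<le> h j" using inst j unfolding bgt_instance_def by auto
        thus ?thesis using inst unfolding bgt_instance_def by auto
      qed
      ultimately show ?thesis by linarith
    qed
    hence "(\<Sum>j\<in>{1..n}. h j * t) \<le> (\<Sum>j\<in>{1..n}. H * cnt \<sigma> j t + H)"
      by (rule sum_mono)
    also have "\<dots> = H * real (\<Sum>j\<in>{1..n}. cnt \<sigma> j t) + H * real n"
      by (simp add: sum.distrib sum_distrib_left)
    also have "\<dots> = H * real t + H * real n" using cnt_sum[OF sch] by simp
    finally show ?thesis by (simp add: sum_distrib_right)
  qed
  show ?thesis
  proof (rule ccontr)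
    assume "\<not> ?thesis"
    hence d: "(\<Sum>j\<in>{1..n}. h j) - H > 0" by simp
    obtain t :: nat where t: "real t > H * real n / ((\<Sum>j\<in>{1..n}. h j) - H)"
      using reals_Archimedean2 by blast
    hence "real t * ((\<Sum>j\<in>{1..n}. h j) - H) > H * real n"
      using d by (simp add: pos_divide_less_eq)
    with key[of t] show False by (simp add: algebra_simps)
  qed
qed

lemma after_le_t: "h j \<ge> 0 \<Longrightarrow> height_after h \<sigma> j t \<le> h j * t"
  by (induction t) (auto simp: algebra_simps)

lemma after_le_cut:
  assumes "h j \<ge> 0" "\<sigma> t' = j" "1 \<le> t'" "t' \<le> t"
  shows "height_after h \<sigma> j t \<le> h j * (t - t')"
  using assms(4)
proof (induction t)
  case 0 then show ?case using assms by simp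
next
  case (Suc t)
  show ?case
  proof (cases "\<sigma> (Suc t) = j")
    case True then show ?thesis using assms by simp
  next
    case False
    then have "t' \<le> t" using Suc.prems assms(2) by (cases "t' = Suc t") auto
    then have "height_after h \<sigma> j t \<le> h j * (t - t')" using Suc.IH by simp
    then show ?thesis using False \<open>t' \<le> t\<close> by (simp add: Suc_diff_le algebra_simps)
  qed
qed

lemma nonempty:
  assumes inst: "bgt_instance n h"
  shows "\<exists>\<sigma>. schedule n \<sigma> \<and> (\<forall>t\<ge>1. \<forall>j\<in>{1..n}. height_before h \<sigma> j t \<le> real n)"
proof -
  define \<sigma> where "\<sigma> t = (t - 1) mod n + 1" for t
  have n1: "n \<ge> 1" using inst unfolding bgt_instance_def by auto
  have sch: "schedule n \<sigma>" unfolding schedule_def \<sigma>_def using n1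
    by (auto simp: Suc_le_eq)
  have "height_before h \<sigma> j t \<le> real n" if t: "t \<ge> 1" and j: "j \<in> {1..n}" for t j
  proof -
    have hj: "h j \<le> 1" "h j > 0"
      using inst j unfolding bgt_instance_def by (auto intro: order.strict_trans2)
    have b: "height_after h \<sigma> j (t - 1) \<le> h j * (real n - 1)"
    proof (cases "t - 1 < n")
      case True
      then have "real (t - 1) \<le> real n - 1" by linarith
      then show ?thesis using after_le_t[of h j \<sigma> "t-1"] hj
        by (smt (verit) mult_left_mono)
    next
      case False
      define m where "m = t - 1"
      define q where "q = (m - j) div n"
      define r where "r = (m - j) mod n"
      have mj: "m - j = n * q + r" unfolding q_def r_def by simp
      have rn: "r < n" unfolding r_def using n1 by simp
      have jm: "j \<le> m" using False j unfolding m_def by auto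
      define t' where "t' = j + n * q"
      have "\<sigma> t' = j"
      proof -
        have "(t' - 1) = (j - 1) + n * q" unfolding t'_def using j by auto
        hence "(t' - 1) mod n = (j - 1) mod n" by simp
        also have "\<dots> = j - 1" using j by auto
        finally show ?thesis unfolding \<sigma>_def using j by auto
      qed
      moreover have "1 \<le> t'" "t' \<le> m" using j jm mj unfolding t'_def by auto
      ultimately have "height_after h \<sigma> j m \<le> h j * (m - t')"
        using after_le_cut[of h j \<sigma> t' m] hj by simp
      moreover have "m - t' = r" using mj jm unfolding t'_def by auto
      moreover have "real r \<le> real n - 1" using rn by linarith
      ultimately show ?thesis unfolding m_def using hj
        by (smt (verit) mult_left_mono)
    qed
    then have "height_before h \<sigma> j t \<le> h j * real n"
      by (simp add: height_before_def algebra_simps)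
    also have "\<dots> \<le> real n" using hj by (simp add: mult_left_le_one_le)
    finally show ?thesis .
  qed
  thus ?thesis using sch by blast
qed

lemma Hstar_ge:
  assumes inst: "bgt_instance n h"
  shows "(\<Sum>j\<in>{1..n}. h j) \<le> Hstar n h"
  unfolding Hstar_def
  apply (rule cInf_greatest)
  using nonempty[OF inst] density[OF inst] by auto

lemma half_pow_lt:
  assumes "k1 < (k2::nat)" shows "(1/2::real)^k2 \<le> (1/2)^k1 / 2"
proof -
  have "(1/2::real)^k2 \<le> (1/2)^(Suc k1)" using assms by (intro power_decreasing) auto
  thus ?thesis by simp
qed

lemma h3_bound:
  assumes "j \<in> S3 n h"
  shows "0 < h3 h j \<and> h3 h j < 3/2 * h j"
proof -
  let ?P = "\<lambda>x::real. \<exists>k::nat. k \<ge> 1 \<and> x = (1/2)^k \<and> 2/3 * (1/2)^k < h j \<and> h j \<le> (1/2)^k"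
  obtain k where k: "k \<ge> 1" "2/3 * (1/2::real)^k < h j" "h j \<le> (1/2)^k"
    using assms unfolding S3_def by auto
  have ex: "\<exists>!x. ?P x"
  proof (rule ex1I[of _ "(1/2::real)^k"])
    show "?P ((1/2)^k)" using k by blast
  next
    fix x :: real assume "?P x"
    then obtain k' where k': "x = (1/2::real)^k'" "2/3 * (1/2::real)^k' < h j" "h j \<le> (1/2)^k'" by blast
    have p0: "(1/2::real)^k > 0" "(1/2::real)^k' > 0" by auto
    have p1: "(1/2::real)^(k+1) = (1/2)^k/2" "(1/2::real)^(k'+1) = (1/2)^k'/2" by auto
    consider "k < k'" | "k = k'" | "k' < k" by arith
    then show "x = (1/2)^k"
    proof cases
      case 1 then show ?thesis using half_pow_lt[OF 1] k k' using p0 p1 by linarith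
    next
      case 2 then show ?thesis using k' by simp
    next
      case 3 then show ?thesis using half_pow_lt[OF 3] k k' using p0 p1 by linarith
    qed
  qed
  have "?P (h3 h j)" unfolding h3_def by (rule theI'[OF ex])
  then show ?thesis by auto
qed

lemma h4_bound:
  assumes "j \<in> S4 n h"
  shows "0 < h4 h j \<and> h4 h j < 3/2 * h j"
proof -
  let ?P = "\<lambda>x::real. \<exists>k::nat. k \<ge> 1 \<and> x = 2/3 * (1/2)^k \<and> (1/2)^(k+1) < h j \<and> h j \<le> 2/3 * (1/2)^k"
  obtain k where k: "k \<ge> 1" "(1/2::real)^(k+1) < h j" "h j \<le> 2/3 * (1/2)^k"
    using assms unfolding S4_def by auto
  have ex: "\<exists>!x. ?P x"
  proof (rule ex1I[of _ "2/3 * (1/2::real)^k"])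
    show "?P (2/3 * (1/2)^k)" using k by blast
  next
    fix x :: real assume "?P x"
    then obtain k' where k': "x = 2/3 * (1/2::real)^k'" "(1/2::real)^(k'+1) < h j" "h j \<le> 2/3 * (1/2)^k'" by blast
    have p0: "(1/2::real)^k > 0" "(1/2::real)^k' > 0" by auto
    have p1: "(1/2::real)^(k+1) = (1/2)^k/2" "(1/2::real)^(k'+1) = (1/2)^k'/2" by auto
    consider "k < k'" | "k = k'" | "k' < k" by arith
    then show "x = 2/3 * (1/2)^k"
    proof cases
      case 1 then show ?thesis using half_pow_lt[OF 1] k k' using p0 p1 by linarith
    next
      case 2 then show ?thesis using k' by simp
    next
      case 3 then show ?thesis using half_pow_lt[OF 3] k k' using p0 p1 by linarith
    qed
  qed
  have "?P (h4 h j)" unfolding h4_def by (rule theI'[OF ex])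
  then show ?thesis by auto
qed

lemma S34_disj: "S3 n h \<inter> S4 n h = {}"
proof (rule ccontr)
  assume "S3 n h \<inter> S4 n h \<noteq> {}"
  then obtain j k k' where k: "2/3 * (1/2::real)^k < h j" "h j \<le> (1/2)^k"
    and k': "(1/2::real)^(k'+1) < h j" "h j \<le> 2/3 * (1/2)^k'"
    unfolding S3_def S4_def by blast
  show False
  proof (cases "k \<le> k'")
    case True
    then have "(1/2::real)^k' \<le> (1/2)^k" by (intro power_decreasing) auto
    then show False using k k' by linarith
  next
    case False
    then have "(1/2::real)^k \<le> (1/2)^(k'+1)" by (intro power_decreasing) auto
    then show False using k k' by linarith
  qed
qed

lemma sum_S1:
  assumes inst: "bgt_instance n h"
  shows "(\<Sum>j\<in>S1 n h. h j) \<ge> 1 + 2/3 * (real (card (S1 n h)) - 1)"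
proof -
  have n1: "n \<ge> 1" "h 1 = 1" using inst unfolding bgt_instance_def by auto
  have fin: "finite (S1 n h)" unfolding S1_def by auto
  have one: "1 \<in> S1 n h" using n1 unfolding S1_def by auto
  have "(\<Sum>j\<in>S1 n h. h j) = h 1 + (\<Sum>j\<in>S1 n h - {1}. h j)"
    using fin one by (simp add: sum.remove)
  also have "(\<Sum>j\<in>S1 n h - {1}. h j) \<ge> (\<Sum>j\<in>S1 n h - {1}. 2/3)"
    by (rule sum_mono) (auto simp: S1_def)
  moreover have "card (S1 n h - {1}) = card (S1 n h) - 1" using one fin by simp
  moreover have "card (S1 n h) \<ge> 1" using one fin by (simp add: Suc_le_eq card_gt_0_iff; blast)
  ultimately show ?thesis using n1 by (simp add: of_nat_diff)
qed

lemma sum_S2: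
  assumes "j0 \<in> S2 n h"
  shows "(\<Sum>j\<in>S2 n h. h j) \<ge> h j0 + 1/2 * (real (card (S2 n h)) - 1)"
proof -
  have fin: "finite (S2 n h)" unfolding S2_def by auto
  have "(\<Sum>j\<in>S2 n h. h j) = h j0 + (\<Sum>j\<in>S2 n h - {j0}. h j)"
    using fin assms by (simp add: sum.remove)
  also have "(\<Sum>j\<in>S2 n h - {j0}. h j) \<ge> (\<Sum>j\<in>S2 n h - {j0}. 1/2)"
    by (rule sum_mono) (auto simp: S2_def)
  moreover have "card (S2 n h - {j0}) = card (S2 n h) - 1" using assms fin by simp
  moreover have "card (S2 n h) \<ge> 1" using assms fin by (simp add: Suc_le_eq card_gt_0_iff; blast)
  ultimately show ?thesis by (simp add: of_nat_diff)
qed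

lemma sum_S3: "(\<Sum>j\<in>S3 n h. h j) \<ge> 2/3 * sh3 n h"
proof -
  have "sh3 n h \<le> (\<Sum>j\<in>S3 n h. 3/2 * h j)" unfolding sh3_def
    by (rule sum_mono) (use h3_bound in fastforce)
  also have "\<dots> = 3/2 * (\<Sum>j\<in>S3 n h. h j)" by (simp add: sum_distrib_left)
  finally show ?thesis by simp
qed

lemma sum_S4: "(\<Sum>j\<in>S4 n h. h j) \<ge> 2/3 * sh4 n h"
proof -
  have "sh4 n h \<le> (\<Sum>j\<in>S4 n h. 3/2 * h j)" unfolding sh4_def
    by (rule sum_mono) (use h4_bound in fastforce)
  also have "\<dots> = 3/2 * (\<Sum>j\<in>S4 n h. h j)" by (simp add: sum_distrib_left)
  finally show ?thesis by simp
qed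

lemma sh_nonneg: "sh3 n h \<ge> 0" "sh4 n h \<ge> 0"
  unfolding sh3_def sh4_def
  by (auto intro!: sum_nonneg dest: h3_bound h4_bound simp: less_imp_le)

lemma sum_all:
  assumes inst: "bgt_instance n h"
  shows "(\<Sum>j\<in>S1 n h. h j) + (\<Sum>j\<in>S2 n h. h j) + (\<Sum>j\<in>S3 n h. h j) + (\<Sum>j\<in>S4 n h. h j)
     \<le> (\<Sum>j\<in>{1..n}. h j)"
proof -
  have pos: "\<forall>j\<in>{1..n}. h j \<ge> 0"
  proof
    fix j assume j: "j \<in> {1..n}"
    have "h n \<le> h j" using inst j unfolding bgt_instance_def by auto
    thus "h j \<ge> 0" using inst unfolding bgt_instance_def by auto
  qed
  have fins: "finite (S1 n h)" "finite (S2 n h)" "finite (S3 n h)" "finite (S4 n h)"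
    unfolding S1_def S2_def S3_def S4_def by auto
  have d12: "S1 n h \<inter> S2 n h = {}" unfolding S1_def S2_def by auto
  have d: "(S1 n h \<union> S2 n h) \<inter> (S3 n h \<union> S4 n h) = {}" unfolding S1_def S2_def S3_def S4_def by auto
  have "(\<Sum>j\<in>S1 n h \<union> S2 n h \<union> (S3 n h \<union> S4 n h). h j) =
    (\<Sum>j\<in>S1 n h. h j) + (\<Sum>j\<in>S2 n h. h j) + ((\<Sum>j\<in>S3 n h. h j) + (\<Sum>j\<in>S4 n h. h j))"
    using fins d12 d S34_disj by (simp add: sum.union_disjoint)
  moreover have "(\<Sum>j\<in>S1 n h \<union> S2 n h \<union> (S3 n h \<union> S4 n h). h j) \<le> (\<Sum>j\<in>{1..n}. h j)"
    by (rule sum_mono2) (use pos in \<open>auto simp: S1_def S2_def S3_def S4_def\<close>)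
  ultimately show ?thesis by simp
qed

theorem proposition3:
  fixes n :: nat and h :: "nat \<Rightarrow> real"
  assumes "bgt_instance n h"
    and "int (card (S2 n h)) > pi1 n h + pi3 n h + pi4 n h - 1"
    and "card (S2 n h) \<ge> 4"
    and "even (card (S2 n h))"
  shows "H_PW2 n h \<le> ereal (32000 / 16947 * Hstar n h)"
proof -
  note inst = assms(1)
  define a where "a = real (card (S1 n h))"
  define s where "s = real (card (S2 n h))"
  define T where "T = sh3 n h + sh4 n h"
  define L where "L = (\<Sum>j\<in>{1..n}. h j)"
  define hs where "hs = Max (h ` S2 n h)"
  have fin2: "finite (S2 n h)" unfolding S2_def by auto
  have ne2: "S2 n h \<noteq> {}" using assms(3) by auto
  obtain j0 where j0: "j0 \<in> S2 n h" "h j0 = hs"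
  proof -
    have "hs \<in> h ` S2 n h" unfolding hs_def using fin2 ne2 by (intro Max_in) auto
    thus ?thesis using that by auto
  qed
  have hs: "1/2 < hs" "hs \<le> 2/3" using j0 unfolding S2_def by auto
  have LH: "L \<le> Hstar n h" unfolding L_def by (rule Hstar_ge[OF inst])
  have Llow: "L \<ge> 1 + 2/3 * (a - 1) + hs + 1/2 * (s - 1) + 2/3 * T"
  proof -
    note f1 = sum_all[OF inst] and f2 = sum_S1[OF inst] and f3 = sum_S2[OF j0(1)] and f4 = sum_S3[of n h] and f5 = sum_S4[of n h]
    have "1 + 2/3 * (a - 1) + hs + 1/2 * (s - 1) + 2/3 * T \<le>
      (\<Sum>j\<in>S1 n h. h j) + (\<Sum>j\<in>S2 n h. h j) + (\<Sum>j\<in>S3 n h. h j) + (\<Sum>j\<in>S4 n h. h j)"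
    proof -
      have g1: "1 + 2/3 * (a - 1) \<le> (\<Sum>j\<in>S1 n h. h j)" unfolding a_def using f2 by simp
      have g2: "hs + 1/2 * (s - 1) \<le> (\<Sum>j\<in>S2 n h. h j)" unfolding s_def using f3 j0(2) by simp
      have g3: "2/3 * sh3 n h \<le> (\<Sum>j\<in>S3 n h. h j)" using f4 by simp
      have g4: "2/3 * sh4 n h \<le> (\<Sum>j\<in>S4 n h. h j)" using f5 by simp
      show ?thesis unfolding T_def using g1 g2 g3 g4 by argo
    qed
    then show ?thesis unfolding L_def using f1 by linarith
  qed
  define Z :: real where "Z = of_int (pi1 n h + int (card (S2 n h) div 2) + pi3 n h + pi4 n h
                                  + \<lceil>0 + f3 n h + f4 n h\<rceil>)"
  have zb: "z_b n h = ereal (2 * hs * Z)"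
    unfolding z_b_def Z_def hs_def using ne2 assms(4) by (simp add: Let_def)
  have s2: "real (card (S2 n h) div 2) = s / 2" unfolding s_def using assms(4)
    by (auto elim!: evenE)
  have ceil: "real_of_int \<lceil>0 + f3 n h + f4 n h\<rceil> < f3 n h + f4 n h + 1" by linarith
  have ceil0: "real_of_int \<lceil>0 + f3 n h + f4 n h\<rceil> \<ge> 0"
  proof -
    have "f3 n h \<ge> 0" "f4 n h \<ge> 0" unfolding f3_def f4_def pi3_def pi4_def by auto
    thus ?thesis by simp
  qed
  have p34: "pi3 n h \<ge> 0" "pi4 n h \<ge> 0" using sh_nonneg unfolding pi3_def pi4_def by auto
  have ZX: "Z < a + s/2 + T + 1"
    using ceil s2 unfolding Z_def a_def T_def pi1_def f3_def f4_def by simp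
  have Z0: "Z \<ge> 0" using ceil0 p34 unfolding Z_def pi1_def by simp
  have cons: "s \<ge> a + real_of_int (pi3 n h) + real_of_int (pi4 n h)"
    using assms(2) unfolding s_def a_def pi1_def by linarith
  have fl: "real_of_int (pi3 n h) > sh3 n h - 1" "real_of_int (pi4 n h) > sh4 n h - 1"
    unfolding pi3_def pi4_def by linarith+
  have aT: "a + T < s + 2" using cons fl unfolding T_def by linarith
  have s4: "s \<ge> 4" using assms(3) unfolding s_def by simp
  have a1: "a \<ge> 1"
  proof -
    have "1 \<in> S1 n h" using inst unfolding S1_def bgt_instance_def by auto
    moreover have "finite (S1 n h)" unfolding S1_def by auto
    ultimately have "card (S1 n h) \<ge> 1" by (simp add: Suc_le_eq card_gt_0_iff; blast)
    thus ?thesis unfolding a_def by simp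
  qed
  have T0: "T \<ge> 0" using sh_nonneg unfolding T_def by auto
  have "2 * hs * Z \<le> 2 * hs * (a + s/2 + T + 1)"
    using ZX hs by (intro mult_left_mono) auto
  also have "\<dots> \<le> 32000 / 16947 * (1 + 2/3 * (a - 1) + hs + 1/2 * (s - 1) + 2/3 * T)"
  proof -
    define X where "X = a + s/2 + T + 1"
    have P: "(2/3 - hs) * (2 * X - 32000 / 16947) \<ge> 0"
      using hs a1 s4 T0 unfolding X_def by (intro mult_nonneg_nonneg) auto
    have P': "2 * hs * X - 32000 / 16947 * hs \<le> 4/3 * X - 2/3 * (32000 / 16947)"
    proof -
      have "(2/3 - hs) * (2 * X - 32000 / 16947) = 4/3 * X - 2/3 * (32000 / 16947) - (2 * hs * X - 32000 / 16947 * hs)"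
        by (simp add: field_simps)
      thus ?thesis using P by linarith
    qed
    have lin: "4/3 * X - 2/3 * (32000 / 16947) \<le> 32000 / 16947 * (1/3 + 2/3 * a + 1/2 * s - 1/2 + 2/3 * T)"
      using aT s4 a1 T0 unfolding X_def by (simp add: field_simps)
    have "2 * hs * (a + s/2 + T + 1) = 2 * hs * X" unfolding X_def by simp
    also have "\<dots> \<le> 32000 / 16947 * (1/3 + 2/3 * a + 1/2 * s - 1/2 + 2/3 * T) + 32000 / 16947 * hs"
      using P' lin by linarith
    also have "\<dots> = 32000 / 16947 * (1 + 2/3 * (a - 1) + hs + 1/2 * (s - 1) + 2/3 * T)"
      by (simp add: field_simps)
    finally show ?thesis .
  qed
  also have "\<dots> \<le> 32000 / 16947 * Hstar n h" using Llow LH by (intro mult_left_mono) auto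
  finally have "2 * hs * Z \<le> 32000 / 16947 * Hstar n h" .
  hence "z_b n h \<le> ereal (32000 / 16947 * Hstar n h)" using zb by simp
  thus ?thesis unfolding H_PW2_def by (simp add: min.coboundedI2)
qed

end
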